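(* Consider the multi-level, single-user caching problem described in the context, with $L$ levels, level $i$ having $N_i$ files and $K_i$ users, and cache memory $M\ge 0$. Let \[ H'=\{h\in\{1,\dots,L\}: M<N_h/K_h\},\qquad I'=\{1,\dots,L\}\setminus H'. \] Then the rate \[ R^{\mathrm{SU}}(M)=\sum_{h\in H'}K_h+\max\Big\{\frac{\sum_{i\in I'}N_i}{M}-1,\;0\Big\} \] is achievable (the second term being $0$ when $I'=\emptyset$).
   Context: Multi-level, single-user caching problem. A server holds $\sum_{i=1}^L N_i$ files of $F$ bits each, partitioned into $L$ popularity levels, level $i$ containing $N_i$ files. There are $K=\sum_{i=1}^L K_i$ caches (each $K_i\ge1$), each able to store $MF$ bits, and exactly one user connected to each cache. In a placement phase, before requests are known, arbitrary functions of the files are stored in the caches. In the delivery phase, exactly $K_i$ of the $K$ users request a file from level $i$, for each $i$; which users these are is not known in advance, and each such user may request any file of level $i$. The server sends one broadcast of $RF$ bits heard by all users, and each user must recover its requested file from the broadcast and its cache. A pair $(R,M)$ is achievable if there is a placement-and-delivery strategy with cache memory $M$ that, for every admissible assignment of users to levels and every admissible choice of requested files, uses a broadcast of rate at most $R$ satisfying all requests (with vanishing error probability as $F\to\infty$). Standing assumption: $N_i\ge K_i$ for every level $i$. *)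

theory Defs
  imports Complex_Main
begin

text \<open>Levels are 1..L; level i has N i files
and K i users (one user per cache). Users/caches are indexed 0..<total_users K L.
A library W assigns to file j of level i a bit string W i j of length F
(entries outside the index range are fixed to the empty list, so the set of
libraries is finite). Files are uniformly random, i.e. the error probability
is a count over all libraries divided by their number.\<close>

definition total_users :: "(nat \<Rightarrow> nat) \<Rightarrow> nat \<Rightarrow> nat" where
  "total_users K L = (\<Sum>i=1..L. K i)"

definition libraries :: "nat \<Rightarrow> (nat \<Rightarrow> nat) \<Rightarrow> nat \<Rightarrow> (nat \<Rightarrow> nat \<Rightarrow> bool list) set" where
  "libraries L N F = {W. \<forall>i j. if i \<in> {1..L} \<and> j < N i then length (W i j) = F else W i j = []}"

definition admissible_demand :: "nat \<Rightarrow> (nat \<Rightarrow> nat) \<Rightarrow> (nat \<Rightarrow> nat) \<Rightarrow> (nat \<Rightarrow> nat \<times> nat) \<Rightarrow> bool" where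
  "admissible_demand L N K d \<longleftrightarrow>
     (\<forall>k < total_users K L. fst (d k) \<in> {1..L} \<and> snd (d k) < N (fst (d k))) \<and>
     (\<forall>i \<in> {1..L}. card {k. k < total_users K L \<and> fst (d k) = i} = K i)"

text \<open>A placement-and-delivery scheme with file size F, cache size floor(M F) bits,
broadcast of floor(R F) bits, whose error probability (for uniformly random files)
is at most eps for every admissible demand. phi k = cache content of cache k,
psi d = broadcast for demand d, mu d k = decoder of user k.\<close>
definition scheme_exists :: "nat \<Rightarrow> (nat \<Rightarrow> nat) \<Rightarrow> (nat \<Rightarrow> nat) \<Rightarrow> real \<Rightarrow> real \<Rightarrow> nat \<Rightarrow> real \<Rightarrow> bool" where
  "scheme_exists L N K R M F eps \<longleftrightarrow>
     (\<exists>(phi :: nat \<Rightarrow> (nat \<Rightarrow> nat \<Rightarrow> bool list) \<Rightarrow> bool list)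
       (psi :: (nat \<Rightarrow> nat \<times> nat) \<Rightarrow> (nat \<Rightarrow> nat \<Rightarrow> bool list) \<Rightarrow> bool list)
       (mu :: (nat \<Rightarrow> nat \<times> nat) \<Rightarrow> nat \<Rightarrow> bool list \<Rightarrow> bool list \<Rightarrow> bool list).
        (\<forall>k W. length (phi k W) = nat \<lfloor>M * real F\<rfloor>) \<and>
        (\<forall>d W. length (psi d W) = nat \<lfloor>R * real F\<rfloor>) \<and>
        (\<forall>d. admissible_demand L N K d \<longrightarrow>
           real (card {W \<in> libraries L N F.
                   \<exists>k < total_users K L. mu d k (psi d W) (phi k W) \<noteq> W (fst (d k)) (snd (d k))})
           \<le> eps * real (card (libraries L N F))))"

definition achievable :: "nat \<Rightarrow> (nat \<Rightarrow> nat) \<Rightarrow> (nat \<Rightarrow> nat) \<Rightarrow> real \<Rightarrow> real \<Rightarrow> bool" where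
  "achievable L N K R M \<longleftrightarrow>
     (\<forall>eps > 0. \<exists>F0. \<forall>F \<ge> F0. scheme_exists L N K R M F eps)"

definition R_SU :: "nat \<Rightarrow> (nat \<Rightarrow> nat) \<Rightarrow> (nat \<Rightarrow> nat) \<Rightarrow> real \<Rightarrow> real" where
  "R_SU L N K M =
     (let H = {h \<in> {1..L}. M < real (N h) / real (K h)}; I = {1..L} - H in
      (\<Sum>h\<in>H. real (K h)) +
      (if I = {} then 0 else max ((\<Sum>i\<in>I. real (N i)) / M - 1) 0))"

end

theory Submission
  imports Defs "HOL-Analysis.Kronecker_Approximation_Theorem"
begin


definition pad :: "nat \<Rightarrow> bool list \<Rightarrow> bool list" where
  "pad m xs = take m (xs @ replicate m False)"

lemma length_pad[simp]: "length (pad m xs) = m"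
  by (simp add: pad_def)

lemma take_pad: "length xs \<le> m \<Longrightarrow> take (length xs) (pad m xs) = xs"
  by (simp add: pad_def)

definition sg :: "nat \<Rightarrow> 'a list \<Rightarrow> nat \<Rightarrow> 'a list" where
  "sg s w c = take s (drop (c * s) w)"

definition chunks :: "nat \<Rightarrow> nat \<Rightarrow> 'a list \<Rightarrow> 'a list list" where
  "chunks s n w = map (sg s w) [0..<n]"

lemma concat_blocks:
  assumes "\<forall>j<n. length (g j) = l j" "k < n"
  shows "take (l k) (drop (\<Sum>j<k. l j) (concat (map g [0..<n]))) = g k"
proof -
  have split: "[0..<n] = [0..<k] @ k # [Suc k..<n]"
    using assms(2) by (metis upt_add_eq_append upt_conv_Cons le0 less_imp_le_nat Suc_le_eq le_add1 add_0 le_Suc_ex)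
  have len: "length (concat (map g [0..<k])) = (\<Sum>j<k. l j)"
    using assms by (simp add: length_concat sum_list_sum_nth atLeast0LessThan)
  show ?thesis using assms by (simp add: split len)
qed

lemma chunks_concat:
  assumes "\<forall>x\<in>set xs. length (g x) = s"
  shows "chunks s (length xs) (concat (map g xs)) = map g xs"
proof (rule nth_equalityI)
  show "length (chunks s (length xs) (concat (map g xs))) = length (map g xs)"
    by (simp add: chunks_def)
next
  fix i assume i: "i < length (chunks s (length xs) (concat (map g xs)))"
  hence i': "i < length xs" by (simp add: chunks_def)
  have eq: "map (\<lambda>j. g (xs ! j)) [0..<length xs] = map g xs"
    by (rule nth_equalityI) auto
  have "take s (drop (\<Sum>j<i. s) (concat (map (\<lambda>j. g (xs ! j)) [0..<length xs]))) = g (xs ! i)"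
    by (rule concat_blocks[where l = "\<lambda>_. s"]) (use assms i' in auto)
  hence "take s (drop (i * s) (concat (map g xs))) = g (xs ! i)"
    by (simp only: eq sum_constant card_lessThan) (simp add: mult.commute)
  thus "chunks s (length xs) (concat (map g xs)) ! i = map g xs ! i"
    using i' by (simp add: chunks_def sg_def)
qed

lemma concat_chunks:
  "n * s \<le> length w \<Longrightarrow> concat (chunks s n w) = take (n * s) w"
proof (induction n)
  case 0 thus ?case by (simp add: chunks_def)
next
  case (Suc n)
  have "concat (chunks s (Suc n) w) = concat (chunks s n w) @ sg s w n"
    by (simp add: chunks_def)
  also have "\<dots> = take (n * s) w @ take s (drop (n * s) w)"
    using Suc by (simp add: sg_def)
  also have "\<dots> = take (n * s + s) w"
    by (metis take_add)
  also have "\<dots> = take (Suc n * s) w"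
    by (simp add: add.commute)
  finally show ?case .
qed

definition lk :: "'k list \<Rightarrow> nat \<Rightarrow> 'a list \<Rightarrow> 'k \<Rightarrow> 'a list" where
  "lk keys s w x = the (map_of (zip keys (chunks s (length keys) w)) x)"

lemma lk_concat:
  assumes "\<forall>y\<in>set keys. length (g y) = s" "x \<in> set keys"
  shows "lk keys s (concat (map g keys)) x = g x"
  using assms by (simp add: lk_def chunks_concat map_of_zip_map)

definition xr :: "nat set \<Rightarrow> (nat \<Rightarrow> bool list) \<Rightarrow> nat \<Rightarrow> bool list" where
  "xr S y s = map (\<lambda>p. odd (card {u \<in> S. y u ! p})) [0..<s]"

lemma length_xs[simp]: "length (xr S y s) = s" by (simp add: xr_def)

lemma xr_cong: "(\<And>u. u \<in> S \<Longrightarrow> y u = y' u) \<Longrightarrow> xr S y s = xr S y' s"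
  unfolding xr_def by (metis (mono_tags, lifting) mem_Collect_eq Collect_cong)

lemma xr_decode:
  assumes "finite S" "k \<in> S" "length (y k) = s"
  shows "map (\<lambda>p. (xr S y s ! p) \<noteq> (xr (S - {k}) y s ! p)) [0..<s] = y k"
proof (rule nth_equalityI)
  show "length (map (\<lambda>p. (xr S y s ! p) \<noteq> (xr (S - {k}) y s ! p)) [0..<s]) = length (y k)"
    using assms by simp
next
  fix p assume "p < length (map (\<lambda>p. (xr S y s ! p) \<noteq> (xr (S - {k}) y s ! p)) [0..<s])"
  hence p: "p < s" by simp
  have e: "{u \<in> S. y u ! p} = (if y k ! p then insert k {u \<in> S - {k}. y u ! p} else {u \<in> S - {k}. y u ! p})"
    using assms by auto
  have f: "finite {u \<in> S - {k}. y u ! p}" using assms by simp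
  show "map (\<lambda>p. (xr S y s ! p) \<noteq> (xr (S - {k}) y s ! p)) [0..<s] ! p = y k ! p"
    using p f by (simp add: xr_def e)
qed



lemma length_concat_const:
  "(\<forall>x\<in>set xs. length (g x) = s) \<Longrightarrow> length (concat (map g xs)) = length xs * s"
  by (induction xs) auto

lemma subsets_list:
  "\<exists>l. distinct l \<and> set l = {T. T \<subseteq> {..<(Kv::nat)} \<and> card T = t}"
proof -
  have "finite {T. T \<subseteq> {..<(Kv::nat)} \<and> card T = t}"
    by (rule finite_subset[of _ "Pow {..<Kv}"]) auto
  thus ?thesis by (metis finite_distinct_list)
qed

locale mlc =
  fixes L :: nat and N K :: "nat \<Rightarrow> nat" and Hs :: "nat set" and Kv t F m n :: nat
begin

definition "U = total_users K L"
definition "IF = concat (map (\<lambda>i. map (\<lambda>j. (i,j)) [0..<N i]) (filter (\<lambda>i. i \<notin> Hs) [1..<Suc L]))"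
definition "C = Kv choose t"
definition "s = F div C"
definition "Ts = (SOME l. distinct l \<and> set l = {T. T \<subseteq> {..<Kv} \<and> card T = t})"
definition "Ss = (SOME l. distinct l \<and> set l = {T. T \<subseteq> {..<Kv} \<and> card T = Suc t})"
definition "idx T = the (map_of (zip Ts [0..<length Ts]) T)"
definition "seg W f T = sg s (W (fst f) (snd f)) (idx T)"
definition "keys k = filter (\<lambda>(f,T). k \<in> T) (List.product IF Ts)"
definition "cont k W = concat (map (\<lambda>(f,T). seg W f T) (keys k))"
definition "phi k W = pad m (cont k W)"
definition "D d u = (if u < U \<and> fst (d u) \<notin> Hs then d u else hd IF)"
definition "msg d W S = xr S (\<lambda>u. seg W (D d u) (S - {u})) s"
definition "len d j = (if fst (d j) \<in> Hs then F else F - C * s)"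
definition "blk d W j = (if fst (d j) \<in> Hs then W (fst (d j)) (snd (d j))
                         else drop (C * s) (W (fst (d j)) (snd (d j))))"
definition "bc d W = concat (map (msg d W) Ss) @ concat (map (blk d W) [0..<U])"
definition "blen d = length Ss * s + (\<Sum>j<U. len d j)"
definition "psi d W = pad n (bc d W)"
definition "mu d k b c =
  (let b' = take (blen d) b; P1 = take (length Ss * s) b'; P2 = drop (length Ss * s) b';
       mine = take (len d k) (drop (\<Sum>j<k. len d j) P2);
       c' = take (length (keys k) * s) c
   in if fst (d k) \<in> Hs then mine else
     concat (map (\<lambda>T. if k \<in> T then lk (keys k) s c' (d k, T)
        else map (\<lambda>p. (lk Ss s P1 (insert k T) ! p) \<noteq>
               (xr T (\<lambda>u. lk (keys k) s c' (D d u, insert k T - {u})) s ! p)) [0..<s]) Ts) @ mine)"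

lemma Ts: "distinct Ts" "set Ts = {T. T \<subseteq> {..<Kv} \<and> card T = t}"
  using someI_ex[OF subsets_list[of Kv t]] unfolding Ts_def by auto

lemma Ss: "distinct Ss" "set Ss = {T. T \<subseteq> {..<Kv} \<and> card T = Suc t}"
  using someI_ex[OF subsets_list[of Kv "Suc t"]] unfolding Ss_def by auto

lemma length_Ts: "length Ts = C"
proof -
  have "length Ts = card (set Ts)" using Ts(1) by (simp add: distinct_card)
  also have "\<dots> = card {..<Kv} choose t" unfolding Ts(2) by (rule n_subsets) simp
  finally show ?thesis by (simp add: C_def)
qed

lemma length_Ss: "length Ss = Kv choose Suc t"
proof -
  have "length Ss = card (set Ss)" using Ss(1) by (simp add: distinct_card)
  also have "\<dots> = card {..<Kv} choose Suc t" unfolding Ss(2) by (rule n_subsets) simp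
  finally show ?thesis by simp
qed

lemma C_pos: "t \<le> Kv \<Longrightarrow> 0 < C"
  by (simp add: C_def)

lemma Cs_le: "C * s \<le> F"
  by (simp add: s_def mult.commute)

lemma idx_nth: "i < length Ts \<Longrightarrow> idx (Ts ! i) = i"
  unfolding idx_def using Ts(1) by (simp add: map_of_zip_nth)

lemma idx_lt: "T \<in> set Ts \<Longrightarrow> idx T < C"
  by (metis in_set_conv_nth idx_nth length_Ts)

lemma map_idx: "map (\<lambda>T. g (idx T)) Ts = map g [0..<C]"
  by (rule nth_equalityI) (auto simp: idx_nth length_Ts)

lemma IF_iff: "f \<in> set IF \<longleftrightarrow> fst f \<in> {1..L} \<and> fst f \<notin> Hs \<and> snd f < N (fst f)"
  by (cases f) (auto simp: IF_def)

lemma lib_len: "W \<in> libraries L N F \<Longrightarrow> fst f \<in> {1..L} \<Longrightarrow> snd f < N (fst f)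
   \<Longrightarrow> length (W (fst f) (snd f)) = F"
  unfolding libraries_def by (metis (mono_tags, lifting) mem_Collect_eq)

lemma length_seg:
  assumes "W \<in> libraries L N F" "f \<in> set IF" "T \<in> set Ts"
  shows "length (seg W f T) = s"
proof -
  have lw: "length (W (fst f) (snd f)) = F" using assms lib_len IF_iff by blast
  have "Suc (idx T) \<le> C" using idx_lt assms(3) by (simp add: Suc_le_eq)
  hence "Suc (idx T) * s \<le> C * s" by (rule mult_le_mono1)
  hence "idx T * s + s \<le> F" using Cs_le by simp
  thus ?thesis unfolding seg_def sg_def using lw by simp
qed

lemma length_cont:
  assumes "W \<in> libraries L N F"
  shows "length (cont k W) = length (keys k) * s"
  unfolding cont_def
  by (rule length_concat_const) (use assms length_seg in \<open>auto simp: keys_def\<close>)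

lemma adm_valid:
  assumes "admissible_demand L N K d" "k < U"
  shows "fst (d k) \<in> {1..L}" "snd (d k) < N (fst (d k))"
  using assms unfolding admissible_demand_def U_def by auto

lemma length_blk:
  assumes "W \<in> libraries L N F" "admissible_demand L N K d" "j < U"
  shows "length (blk d W j) = len d j"
  using lib_len[OF assms(1) adm_valid[OF assms(2,3)]]
  by (simp add: blk_def len_def)

lemma D_in:
  assumes "admissible_demand L N K d" "IF \<noteq> []"
  shows "D d u \<in> set IF"
proof (cases "u < U \<and> fst (d u) \<notin> Hs")
  case True thus ?thesis using adm_valid[OF assms(1), of u] by (simp add: D_def IF_iff)
next
  case False
  hence "D d u = hd IF" unfolding D_def by meson
  thus ?thesis using assms(2) by (simp add: hd_in_set)
qed

lemma length_msg[simp]: "length (msg d W S) = s"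
  by (simp add: msg_def)

lemma length_bc:
  assumes "W \<in> libraries L N F" "admissible_demand L N K d"
  shows "length (bc d W) = blen d"
proof -
  have "length (concat (map (msg d W) Ss)) = length Ss * s"
    by (rule length_concat_const) simp
  moreover have "length (concat (map (blk d W) [0..<U])) = (\<Sum>j<U. len d j)"
    using length_blk[OF assms] by (simp add: length_concat sum_list_sum_nth atLeast0LessThan)
  ultimately show ?thesis by (simp add: bc_def blen_def)
qed

lemma decode:
  assumes W: "W \<in> libraries L N F" and d: "admissible_demand L N K d" and k: "k < U"
    and Kv: "U \<le> Kv" and t: "t \<le> Kv"
    and cm: "length (keys k) * s \<le> m" and bn: "blen d \<le> n"
  shows "mu d k (psi d W) (phi k W) = W (fst (d k)) (snd (d k))"
proof -
  define w where "w = W (fst (d k)) (snd (d k))"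
  have lw: "length w = F" unfolding w_def using lib_len[OF W adm_valid[OF d k]] .
  have b': "take (blen d) (psi d W) = bc d W"
    unfolding psi_def using take_pad[of "bc d W" n] length_bc[OF W d] bn by simp
  have l1: "length (concat (map (msg d W) Ss)) = length Ss * s"
    by (rule length_concat_const) simp
  have P1: "take (length Ss * s) (bc d W) = concat (map (msg d W) Ss)"
    using l1 by (simp add: bc_def)
  have P2: "drop (length Ss * s) (bc d W) = concat (map (blk d W) [0..<U])"
    using l1 by (simp add: bc_def)
  have mine: "take (len d k) (drop (\<Sum>j<k. len d j) (concat (map (blk d W) [0..<U]))) = blk d W k"
    by (rule concat_blocks) (use length_blk[OF W d] k in auto)
  have c': "take (length (keys k) * s) (phi k W) = cont k W"
    unfolding phi_def using take_pad[of "cont k W" m] length_cont[OF W] cm by simp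
  have lkc: "lk (keys k) s (cont k W) x = seg W (fst x) (snd x)" if "x \<in> set (keys k)" for x
  proof -
    have "lk (keys k) s (concat (map (\<lambda>(f,T). seg W f T) (keys k))) x = (\<lambda>(f,T). seg W f T) x"
      by (rule lk_concat) (use that length_seg[OF W] in \<open>auto simp: keys_def\<close>)
    thus ?thesis by (simp add: cont_def split_beta)
  qed
  have lks: "lk Ss s (concat (map (msg d W) Ss)) S = msg d W S" if "S \<in> set Ss" for S
    by (rule lk_concat) (use that in auto)
  show ?thesis
  proof (cases "fst (d k) \<in> Hs")
    case True
    thus ?thesis unfolding mu_def Let_def b' P1 P2 mine c' by (simp add: blk_def)
  next
    case False
    have dkIF: "d k \<in> set IF" using False adm_valid[OF d k] by (simp add: IF_iff)
    hence IFne: "IF \<noteq> []" by auto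
    have Ddk: "D d k = d k" using False k by (simp add: D_def)
    have segT: "(if k \<in> T then lk (keys k) s (cont k W) (d k, T)
        else map (\<lambda>p. (lk Ss s (concat (map (msg d W) Ss)) (insert k T) ! p) \<noteq>
               (xr T (\<lambda>u. lk (keys k) s (cont k W) (D d u, insert k T - {u})) s ! p)) [0..<s])
       = seg W (d k) T" if T: "T \<in> set Ts" for T
    proof (cases "k \<in> T")
      case True
      have "(d k, T) \<in> set (keys k)" using True T dkIF by (simp add: keys_def)
      thus ?thesis using True lkc by simp
    next
      case False
      define S where "S = insert k T"
      have kKv: "k < Kv" using k Kv by simp
      have Tsub: "T \<subseteq> {..<Kv}" "card T = t" using T Ts(2) by auto
      have finT: "finite T" using Tsub(1) finite_subset by blast
      have SSs: "S \<in> set Ss" using Tsub kKv False finT by (simp add: Ss(2) S_def)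
      have ST: "S - {k} = T" using False by (simp add: S_def)
      have cong: "xr T (\<lambda>u. lk (keys k) s (cont k W) (D d u, S - {u})) s
                = xr (S - {k}) (\<lambda>u. seg W (D d u) (S - {u})) s"
      proof -
        have "lk (keys k) s (cont k W) (D d u, S - {u}) = seg W (D d u) (S - {u})" if u: "u \<in> T" for u
        proof -
          have uk: "u \<noteq> k" using u False by auto
          have "S - {u} \<in> set Ts"
          proof -
            have "S - {u} = insert k (T - {u})" using uk by (auto simp: S_def)
            moreover have "card (insert k (T - {u})) = t"
              using finT u False Tsub(2) by (simp add: card_Diff_singleton)
                (metis Tsub(2) card_Diff1_le card_gt_0_iff Suc_pred empty_iff finT le_less_trans lessI u)
            ultimately show ?thesis using Tsub(1) kKv by (auto simp: Ts(2))
          qed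
          moreover have "k \<in> S - {u}" using uk by (simp add: S_def)
          ultimately have "(D d u, S - {u}) \<in> set (keys k)"
            using D_in[OF d IFne] by (simp add: keys_def)
          thus ?thesis using lkc by simp
        qed
        thus ?thesis unfolding ST by (rule xr_cong)
      qed
      have "map (\<lambda>p. (msg d W S ! p) \<noteq> (xr (S - {k}) (\<lambda>u. seg W (D d u) (S - {u})) s ! p)) [0..<s]
            = seg W (D d k) (S - {k})"
        unfolding msg_def
      proof (rule xr_decode)
        show "finite S" using finT by (simp add: S_def)
        show "k \<in> S" by (simp add: S_def)
        show "length (seg W (D d k) (S - {k})) = s"
          unfolding Ddk ST using length_seg[OF W dkIF T] .
      qed
      thus ?thesis using False lks[OF SSs] cong by (simp add: S_def[symmetric] Ddk ST)
    qed
    have me: "map (\<lambda>T. seg W (d k) T) Ts = chunks s C w"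
      unfolding seg_def w_def chunks_def by (rule map_idx)
    have cc: "concat (chunks s C w) = take (C * s) w"
      by (rule concat_chunks) (simp add: lw Cs_le)
    have "concat (map (\<lambda>T. seg W (d k) T) Ts) = take (C * s) w"
      unfolding me cc ..
    moreover have "concat (map (\<lambda>T. if k \<in> T then lk (keys k) s (cont k W) (d k, T)
        else map (\<lambda>p. (lk Ss s (concat (map (msg d W) Ss)) (insert k T) ! p) \<noteq>
               (xr T (\<lambda>u. lk (keys k) s (cont k W) (D d u, insert k T - {u})) s ! p)) [0..<s]) Ts)
       = concat (map (\<lambda>T. seg W (d k) T) Ts)"
      by (rule arg_cong[where f=concat], rule map_cong[OF refl], rule segT)
    moreover have "blk d W k = drop (C * s) w"
      using False by (simp add: blk_def w_def)
    moreover have "mu d k (psi d W) (phi k W) = concat (map (\<lambda>T. if k \<in> T then lk (keys k) s (cont k W) (d k, T)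
        else map (\<lambda>p. (lk Ss s (concat (map (msg d W) Ss)) (insert k T) ! p) \<noteq>
               (xr T (\<lambda>u. lk (keys k) s (cont k W) (D d u, insert k T - {u})) s ! p)) [0..<s]) Ts)
        @ blk d W k"
      unfolding mu_def Let_def b' P1 P2 mine c' by (simp only: if_not_P[OF False])
    ultimately show ?thesis unfolding w_def[symmetric] by simp
  qed
qed

end


context mlc begin

lemma scheme:
  assumes Kv: "U \<le> Kv" and t: "t \<le> Kv" and eps: "eps \<ge> 0"
    and mem: "\<forall>k<U. length (keys k) * s \<le> m"
    and rate: "\<forall>d. admissible_demand L N K d \<longrightarrow> blen d \<le> n"
    and m: "m = nat \<lfloor>M * real F\<rfloor>" and n: "n = nat \<lfloor>R * real F\<rfloor>"
  shows "scheme_exists L N K R M F eps"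
  unfolding scheme_exists_def
proof (intro exI conjI allI impI)
  show "length (phi k W) = nat \<lfloor>M * real F\<rfloor>" for k W unfolding phi_def by (simp add: m)
  show "length (psi d W) = nat \<lfloor>R * real F\<rfloor>" for d W unfolding psi_def by (simp add: n)
  fix d assume d: "admissible_demand L N K d"
  have E: "{W \<in> libraries L N F. \<exists>k<total_users K L. mu d k (psi d W) (phi k W) \<noteq> W (fst (d k)) (snd (d k))} = {}"
    using decode[OF _ d _ Kv t] mem rate d by (auto simp: U_def)
  show "real (card {W \<in> libraries L N F. \<exists>k<total_users K L. mu d k (psi d W) (phi k W) \<noteq> W (fst (d k)) (snd (d k))})
        \<le> eps * real (card (libraries L N F))"
    unfolding E using eps by simp
qed

lemma length_filter_product:
  "length (filter (\<lambda>(f,T). P T) (List.product xs ys)) = length xs * length (filter P ys)"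
  by (induction xs) (auto simp: comp_def split_beta)

lemma length_IF: "length IF = (\<Sum>i\<in>{1..L} - Hs. N i)"
proof -
  have "length IF = sum_list (map N (filter (\<lambda>i. i \<notin> Hs) [1..<Suc L]))"
    by (simp add: IF_def length_concat comp_def)
  also have "\<dots> = (\<Sum>i\<in>set (filter (\<lambda>i. i \<notin> Hs) [1..<Suc L]). N i)"
    by (rule sum_list_distinct_conv_sum_set) simp
  also have "set (filter (\<lambda>i. i \<notin> Hs) [1..<Suc L]) = {1..L} - Hs" by auto
  finally show ?thesis .
qed

lemma card_containing:
  assumes "k < Kv" "0 < t"
  shows "card {T. T \<subseteq> {..<Kv} \<and> card T = t \<and> k \<in> T} \<le> (Kv - 1) choose (t - 1)"
proof -
  let ?A = "{T. T \<subseteq> {..<Kv} \<and> card T = t \<and> k \<in> T}"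
  let ?B = "{A. A \<subseteq> {..<Kv} - {k} \<and> card A = t - 1}"
  have inj: "inj_on (\<lambda>T. T - {k}) ?A"
    by (rule inj_onI) (metis insert_Diff mem_Collect_eq)
  have sub: "(\<lambda>T. T - {k}) ` ?A \<subseteq> ?B"
  proof
    fix X assume "X \<in> (\<lambda>T. T - {k}) ` ?A"
    then obtain T where T: "T \<in> ?A" "X = T - {k}" by blast
    have "finite T" using T(1) finite_subset by auto
    thus "X \<in> ?B" using T by (auto simp: card_Diff_singleton)
  qed
  have finB: "finite ?B" by (rule finite_subset[of _ "Pow {..<Kv}"]) auto
  have "card ?A \<le> card ?B"
    using card_inj_on_le[OF inj sub finB] .
  also have "card ?B = card ({..<Kv} - {k}) choose (t - 1)" by (rule n_subsets) simp
  also have "card ({..<Kv} - {k}) = Kv - 1" using assms by simp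
  finally show ?thesis .
qed

lemma length_keys:
  assumes "k < Kv" "0 < t"
  shows "length (keys k) \<le> (\<Sum>i\<in>{1..L} - Hs. N i) * ((Kv - 1) choose (t - 1))"
proof -
  have "length (keys k) = length IF * length (filter (\<lambda>T. k \<in> T) Ts)"
    unfolding keys_def by (rule length_filter_product)
  also have "length (filter (\<lambda>T. k \<in> T) Ts) = card {T. T \<subseteq> {..<Kv} \<and> card T = t \<and> k \<in> T}"
  proof -
    have "length (filter (\<lambda>T. k \<in> T) Ts) = card ({T. k \<in> T} \<inter> set Ts)"
      by (rule distinct_length_filter[OF Ts(1)])
    also have "{T. k \<in> T} \<inter> set Ts = {T. T \<subseteq> {..<Kv} \<and> card T = t \<and> k \<in> T}"
      using Ts(2) by auto
    finally show ?thesis .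
  qed
  finally show ?thesis using card_containing[OF assms] length_IF by (simp add: mult_le_mono2)
qed

lemma card_H_users:
  assumes d: "admissible_demand L N K d" and H: "Hs \<subseteq> {1..L}"
  shows "card {j. j < U \<and> fst (d j) \<in> Hs} = (\<Sum>h\<in>Hs. K h)"
proof -
  have fin: "finite Hs" using H finite_subset by blast
  have eq: "{j. j < U \<and> fst (d j) \<in> Hs} = (\<Union>h\<in>Hs. {j. j < U \<and> fst (d j) = h})" by auto
  have "card (\<Union>h\<in>Hs. {j. j < U \<and> fst (d j) = h}) = (\<Sum>h\<in>Hs. card {j. j < U \<and> fst (d j) = h})"
    by (rule card_UN_disjoint) (use fin in auto)
  also have "\<dots> = (\<Sum>h\<in>Hs. K h)"
    by (rule sum.cong) (use d H in \<open>auto simp: admissible_demand_def U_def\<close>)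
  finally show ?thesis using eq by simp
qed

lemma blen_bound:
  assumes d: "admissible_demand L N K d" and H: "Hs \<subseteq> {1..L}"
  shows "blen d \<le> (Kv choose Suc t) * s + (\<Sum>h\<in>Hs. K h) * F + U * (F - C * s)"
proof -
  let ?P = "\<lambda>j. fst (d j) \<in> Hs"
  have "(\<Sum>j<U. len d j) = (\<Sum>j\<in>{..<U} \<inter> {j. ?P j}. F) + (\<Sum>j\<in>{..<U} \<inter> - {j. ?P j}. F - C * s)"
    unfolding len_def by (rule sum.If_cases) simp
  also have "\<dots> = card ({..<U} \<inter> {j. ?P j}) * F + card ({..<U} \<inter> - {j. ?P j}) * (F - C * s)"
    by simp
  also have "card ({..<U} \<inter> {j. ?P j}) = (\<Sum>h\<in>Hs. K h)"
  proof -
    have "{..<U} \<inter> {j. ?P j} = {j. j < U \<and> fst (d j) \<in> Hs}" by auto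
    thus ?thesis using card_H_users[OF d H] by simp
  qed
  also have "card ({..<U} \<inter> - {j. ?P j}) * (F - C * s) \<le> U * (F - C * s)"
    by (rule mult_le_mono1) (metis card_lessThan Int_lower1 card_mono finite_lessThan)
  finally have "(\<Sum>j<U. len d j) \<le> (\<Sum>h\<in>Hs. K h) * F + U * (F - C * s)" by simp
  thus ?thesis by (simp add: blen_def length_Ss)
qed

end


lemma exists_Kv_t:
  fixes x :: real and U :: nat
  assumes x0: "0 < x" and x1: "x < 1"
  shows "\<exists>Kv t::nat. U \<le> Kv \<and> t \<le> Kv \<and> real t \<le> x * real Kv \<and> x * real Kv - real t < 1 - x"
proof -
  define NN where "NN = nat \<lceil>(real U + 1) / (1 - x)\<rceil>"
  have q: "(real U + 1) / (1 - x) \<ge> real U + 1"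
    using x0 x1 by (simp add: le_divide_eq)
  have NNge: "real NN \<ge> (real U + 1) / (1 - x)" unfolding NN_def by linarith
  hence NNge2: "real NN \<ge> real U + 1" using q by linarith
  hence NNpos: "NN > 0" by simp
  have inv: "1 / real NN \<le> (1 - x) / (real U + 1)"
    using NNge x0 x1 NNpos by (simp add: field_simps)
  also have "\<dots> \<le> 1 - x"
  proof -
    have "x * real U \<le> real U" using mult_left_le_one_le[of "real U" x] x0 x1 by simp
    thus ?thesis using x1 by (simp add: divide_le_eq field_simps)
  qed
  finally have invle: "1 / real NN \<le> 1 - x" .
  obtain h k where k0: "0 < k" and kN: "k \<le> int NN" and hk: "\<bar>of_int k * x - of_int h\<bar> < 1 / NN"
    using Dirichlet_approx[OF NNpos, of x] by blast
  show ?thesis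
  proof (cases "of_int k * x - of_int h \<ge> (0::real)")
    case True
    define \<delta> where "\<delta> = of_int k * x - of_int h"
    have d0: "\<delta> \<ge> 0" and d1: "\<delta> < 1 / NN" using True hk by (auto simp: \<delta>_def)
    have h0: "h \<ge> 0"
    proof -
      have "of_int h > (-1::real)" using d1 invle x0 k0 True \<delta>_def
        by (smt (verit, ccfv_SIG) mult_pos_pos of_int_pos)
      thus ?thesis by simp
    qed
    define Kv where "Kv = (U + 1) * nat k"
    define t where "t = (U + 1) * nat h"
    have rKv: "real Kv = (real U + 1) * of_int k" using k0 by (simp add: Kv_def algebra_simps)
    have rt: "real t = (real U + 1) * of_int h" using h0 by (simp add: t_def algebra_simps)
    have e: "x * real Kv - real t = (real U + 1) * \<delta>"
      by (simp add: rKv rt \<delta>_def algebra_simps)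
    have "(real U + 1) * \<delta> < (real U + 1) * (1 / NN)"
      using d1 by (intro mult_strict_left_mono) auto
    also have "\<dots> \<le> 1 - x" using inv by (simp add: field_simps)
    finally have lt: "x * real Kv - real t < 1 - x" using e by simp
    have le: "real t \<le> x * real Kv"
    proof -
      have "0 \<le> (real U + 1) * \<delta>" using d0 by simp
      thus ?thesis using e by linarith
    qed
    have "U \<le> Kv"
    proof -
      have "1 \<le> nat k" using k0 by simp
      hence "(U + 1) * 1 \<le> (U + 1) * nat k" by (rule mult_le_mono2)
      thus ?thesis by (simp add: Kv_def)
    qed
    moreover have "t \<le> Kv"
    proof -
      have "x * real Kv \<le> real Kv" using mult_left_le_one_le[of "real Kv" x] x0 x1 by simp
      thus ?thesis using le by linarith
    qed
    ultimately show ?thesis using lt le by blast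
  next
    case False
    define \<delta> where "\<delta> = of_int h - of_int k * x"
    have d0: "\<delta> > 0" and d1: "\<delta> < 1 / NN" using False hk by (auto simp: \<delta>_def)
    have h1: "h \<ge> 1"
    proof -
      have "of_int h > (0::real)" using False x0 k0 by (smt (verit) mult_pos_pos of_int_pos)
      thus ?thesis by simp
    qed
    define mm where "mm = nat \<lfloor>1 / \<delta>\<rfloor>"
    have inv_gt: "1 / \<delta> > real NN" using d0 d1 NNpos by (simp add: field_simps)
    have mm1: "real mm \<le> 1 / \<delta>" unfolding mm_def using d0 by simp
    have mm2: "real mm > 1 / \<delta> - 1" unfolding mm_def using d0 by linarith
    have mmN: "mm \<ge> NN" unfolding mm_def by (rule le_nat_floor) (use inv_gt in linarith)
    define Kv where "Kv = mm * nat k"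
    define t where "t = mm * nat h - 1"
    have mmpos: "mm \<ge> 1" using mmN NNpos by simp
    have rKv: "real Kv = real mm * of_int k" using k0 by (simp add: Kv_def)
    have mh: "mm * nat h \<ge> 1" using mmpos h1 by (simp add: Suc_le_eq)
    have rt: "real t = real mm * of_int h - 1" using h1 mh by (simp add: t_def of_nat_diff)
    have e: "x * real Kv - real t = 1 - real mm * \<delta>"
      by (simp add: rKv rt \<delta>_def algebra_simps)
    have a: "real mm * \<delta> \<le> 1" using mm1 d0 by (simp add: field_simps)
    have b: "real mm * \<delta> > 1 - \<delta>" using mm2 d0 by (simp add: field_simps)
    have lt: "x * real Kv - real t < 1 - x" using e b d1 invle by linarith
    have le: "real t \<le> x * real Kv" using e a by linarith
    have "U \<le> Kv"
    proof -
      have "1 \<le> nat k" using k0 by simp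
      hence "mm * 1 \<le> mm * nat k" by (rule mult_le_mono2)
      hence "mm \<le> Kv" by (simp add: Kv_def)
      moreover have "U \<le> NN" using NNge2 by linarith
      ultimately show ?thesis using mmN by linarith
    qed
    moreover have "t \<le> Kv"
    proof -
      have "x * real Kv \<le> real Kv" using mult_left_le_one_le[of "real Kv" x] x0 x1 by simp
      thus ?thesis using le by linarith
    qed
    ultimately show ?thesis using lt le by blast
  qed
qed



lemma binom_step: "0 < Kv \<Longrightarrow> Suc t * (Kv choose Suc t) = (Kv - t) * (Kv choose t)"
proof -
  assume "0 < Kv"
  then obtain n where n: "Kv = Suc n" by (cases Kv) auto
  have "Suc t * (Kv choose Suc t) = Kv * (n choose t)" unfolding n by (rule Suc_times_binomial)
  also have "\<dots> = (Kv - t) * (Kv choose t)" using binomial_absorb_comp[of Kv t] n by simp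
  finally show ?thesis .
qed

theorem theorem3:
  fixes L :: nat and N K :: "nat \<Rightarrow> nat" and M :: real
  assumes "\<forall>i \<in> {1..L}. K i \<ge> 1"
    and "\<forall>i \<in> {1..L}. N i \<ge> K i"
    and "M \<ge> 0"
  shows "achievable L N K (R_SU L N K M) M"
proof -
  note K1 = assms(1) and NK = assms(2) and M0 = assms(3)
  define H where "H = {h \<in> {1..L}. M < real (N h) / real (K h)}"
  define I where "I = {1..L} - H"
  define NI where "NI = (\<Sum>i\<in>I. N i)"
  define SH where "SH = (\<Sum>h\<in>H. K h)"
  define UU where "UU = total_users K L"
  define R where "R = R_SU L N K M"
  have HL: "H \<subseteq> {1..L}" by (auto simp: H_def)
  have Rdef: "R = real SH + (if I = {} then 0 else max (real NI / M - 1) 0)"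
    unfolding R_def R_SU_def Let_def H_def[symmetric] I_def[symmetric]
    by (simp add: NI_def SH_def sum_divide_distrib[symmetric])
  have RSH: "R \<ge> real SH" unfolding Rdef by auto
  have NIle: "real NI \<le> M * real (\<Sum>i\<in>I. K i)"
  proof -
    have "real (N i) \<le> M * real (K i)" if "i \<in> I" for i
    proof -
      have i: "i \<in> {1..L}" "\<not> M < real (N i) / real (K i)" using that by (auto simp: I_def H_def)
      have "K i \<ge> 1" using K1 i(1) by blast
      thus ?thesis using i(2) by (simp add: not_less divide_le_eq)
    qed
    hence "(\<Sum>i\<in>I. real (N i)) \<le> (\<Sum>i\<in>I. M * real (K i))" by (rule sum_mono)
    thus ?thesis by (simp add: NI_def sum_distrib_left)
  qed
  have UUsplit: "UU = SH + (\<Sum>i\<in>I. K i)"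
  proof -
    have "UU = (\<Sum>i\<in>{1..L}. K i)" by (simp add: UU_def total_users_def)
    also have "\<dots> = (\<Sum>i\<in>H. K i) + (\<Sum>i\<in>{1..L} - H. K i)"
      using sum.subset_diff[OF HL, of K] by simp
    finally show ?thesis by (simp add: SH_def I_def)
  qed
  show ?thesis
    unfolding achievable_def R_def[symmetric]
  proof (intro allI impI)
    fix eps :: real assume eps: "eps > 0"
    show "\<exists>F0. \<forall>F\<ge>F0. scheme_exists L N K R M F eps"
    proof (cases "real NI \<le> M")
      case True
      show ?thesis
      proof (intro exI allI impI)
        fix F :: nat
        interpret mlc L N K H UU UU F "nat \<lfloor>M * real F\<rfloor>" "nat \<lfloor>R * real F\<rfloor>" .
        have C1: "C = 1" by (simp add: C_def)
        have sF: "s = F" by (simp add: s_def C1)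
        show "scheme_exists L N K R M F eps"
        proof (rule scheme)
          show "U \<le> UU" by (simp add: U_def UU_def)
          show "UU \<le> UU" by simp
          show "eps \<ge> 0" using eps by simp
          show "\<forall>k<U. length (keys k) * s \<le> nat \<lfloor>M * real F\<rfloor>"
          proof (intro allI impI)
            fix k assume k: "k < U"
            hence "length (keys k) \<le> NI * ((UU - 1) choose (UU - 1))"
              using length_keys[of k] by (simp add: U_def UU_def NI_def I_def)
            hence "length (keys k) * s \<le> NI * F" by (simp add: sF)
            moreover have "real (NI * F) \<le> M * real F"
              using True by (simp add: mult_right_mono)
            ultimately show "length (keys k) * s \<le> nat \<lfloor>M * real F\<rfloor>"
              by (meson le_nat_floor le_trans of_nat_le_iff)
          qed
          show "\<forall>d. admissible_demand L N K d \<longrightarrow> blen d \<le> nat \<lfloor>R * real F\<rfloor>"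
          proof (intro allI impI)
            fix d assume d: "admissible_demand L N K d"
            have "blen d \<le> SH * F"
              using blen_bound[OF d HL] by (simp add: C1 sF SH_def binomial_eq_0)
            moreover have "real (SH * F) \<le> R * real F" using RSH by (simp add: mult_right_mono)
            ultimately show "blen d \<le> nat \<lfloor>R * real F\<rfloor>"
              by (meson le_nat_floor le_trans of_nat_le_iff)
          qed
        qed simp_all
      qed
    next
      case False
      hence MNI: "M < real NI" by simp
      have Ine: "I \<noteq> {}" using MNI M0 by (auto simp: NI_def)
      have Mpos: "M > 0"
      proof -
        obtain i where i: "i \<in> I" using Ine by blast
        have i1: "i \<in> {1..L}" "\<not> M < real (N i) / real (K i)" using i by (auto simp: I_def H_def)
        have "K i \<ge> 1" "N i \<ge> K i" using K1 NK i1(1) by auto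
        hence "real (N i) / real (K i) \<ge> 1" by simp
        thus ?thesis using i1(2) by simp
      qed
      define x where "x = M / real NI"
      have NIpos: "real NI > 0" using MNI Mpos by simp
      have x0: "0 < x" and x1: "x < 1" using Mpos MNI NIpos by (auto simp: x_def field_simps)
      have xNI: "x * real NI = M" using NIpos by (simp add: x_def)
      have xU: "x * real UU \<ge> 1"
      proof -
        have "real NI \<le> M * real UU" using NIle UUsplit Mpos
          by (smt (verit, best) le_add2 mult_left_mono of_nat_mono)
        thus ?thesis using NIpos by (simp add: x_def field_simps)
      qed
      obtain Kv t where Kv: "UU \<le> Kv" and tKv: "t \<le> Kv" and txK: "real t \<le> x * real Kv"
        and gap0: "x * real Kv - real t < 1 - x"
        using exists_Kv_t[OF x0 x1, of UU] by blast
      have xKv: "x * real Kv \<ge> 1" using xU Kv x0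
        by (smt (verit) mult_left_mono of_nat_mono)
      have t1: "t \<ge> 1"
      proof -
        have "real t > 0" using gap0 xKv x0 by linarith
        thus ?thesis by simp
      qed
      have Kvpos: "Kv > 0" using t1 tKv by simp
      define CC where "CC = Kv choose t"
      have CCpos: "CC > 0" using tKv by (simp add: CC_def)
      define \<rho> where "\<rho> = real (Kv - t) / real (Suc t)"
      have Rx: "R = real SH + (1 / x - 1)"
      proof -
        have "real NI / M - 1 = 1 / x - 1" using Mpos NIpos by (simp add: x_def)
        moreover have "1 / x - 1 > 0" using x0 x1 by (simp add: field_simps)
        ultimately show ?thesis unfolding Rdef using Ine by simp
      qed
      have rho_lt: "\<rho> < 1 / x - 1"
      proof -
        have "x * real (Kv - t) < (1 - x) * real (Suc t)"
          using gap0 tKv by (simp add: of_nat_diff algebra_simps)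
        thus ?thesis using x0 by (simp add: \<rho>_def field_simps)
      qed
      define g where "g = 1 / x - 1 - \<rho>"
      have gpos: "g > 0" using rho_lt by (simp add: g_def)
      show ?thesis
      proof (intro exI allI impI)
        fix F :: nat assume FF0: "F \<ge> nat \<lceil>real UU * real CC / g\<rceil>"
        have gF: "real UU * real CC \<le> g * real F"
        proof -
          have "real UU * real CC / g \<le> real F" using FF0 by linarith
          thus ?thesis using gpos by (simp add: divide_le_eq mult.commute)
        qed
        interpret mlc L N K H Kv t F "nat \<lfloor>M * real F\<rfloor>" "nat \<lfloor>R * real F\<rfloor>" .
        have CCC: "C = CC" by (simp add: C_def CC_def)
        have Cs: "real C * real s \<le> real F" using Cs_le by (metis of_nat_le_iff of_nat_mult)
        show "scheme_exists L N K R M F eps"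
        proof (rule scheme)
          show "U \<le> Kv" using Kv by (simp add: U_def UU_def)
          show "t \<le> Kv" by (rule tKv)
          show "eps \<ge> 0" using eps by simp
          show "\<forall>k<U. length (keys k) * s \<le> nat \<lfloor>M * real F\<rfloor>"
          proof (intro allI impI)
            fix k assume k: "k < U"
            have kKv: "k < Kv" using k Kv by (simp add: U_def UU_def)
            define B where "B = (Kv - 1) choose (t - 1)"
            have lk: "length (keys k) \<le> NI * B"
              using length_keys[OF kKv] t1 by (simp add: NI_def I_def B_def)
            have tB: "real t * real C = real Kv * real B"
              using times_binomial_minus1_eq[of t Kv] t1 unfolding B_def C_def
              by (metis of_nat_mult One_nat_def Suc_le_eq)
            have "real B * real s * real Kv = real t * (real C * real s)" using tB by (simp add: algebra_simps)
            also have "\<dots> \<le> real t * real F" using Cs by (simp add: mult_left_mono)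
            also have "\<dots> \<le> x * real Kv * real F" using txK by (simp add: mult_right_mono)
            finally have "real B * real s \<le> x * real F" using Kvpos by (simp add: algebra_simps)
            hence "real NI * (real B * real s) \<le> real NI * (x * real F)" by (simp add: mult_left_mono)
            moreover have "real NI * (x * real F) = M * real F" using xNI by (simp add: algebra_simps)
            ultimately have "real NI * (real B * real s) \<le> M * real F" by linarith
            hence "real (NI * B * s) \<le> M * real F" by (simp add: mult.assoc)
            moreover have "length (keys k) * s \<le> NI * B * s" using lk by simp
            ultimately show "length (keys k) * s \<le> nat \<lfloor>M * real F\<rfloor>"
              by (meson le_nat_floor le_trans of_nat_le_iff)
          qed
          show "\<forall>d. admissible_demand L N K d \<longrightarrow> blen d \<le> nat \<lfloor>R * real F\<rfloor>"
          proof (intro allI impI)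
            fix d assume d: "admissible_demand L N K d"
            have bb: "blen d \<le> (Kv choose Suc t) * s + SH * F + UU * (F - C * s)"
              using blen_bound[OF d HL] by (simp add: SH_def U_def UU_def)
            have a1: "real ((Kv choose Suc t) * s) \<le> \<rho> * real F"
            proof -
              have "real (Suc t) * real (Kv choose Suc t) = real (Kv - t) * real C"
                using binom_step[OF Kvpos, of t] unfolding C_def by (metis of_nat_mult)
              hence "real (Suc t) * (real (Kv choose Suc t) * real s) = real (Kv - t) * (real C * real s)"
                by (metis mult.assoc)
              also have "\<dots> \<le> real (Kv - t) * real F" using Cs by (simp add: mult_left_mono)
              finally show ?thesis by (simp add: \<rho>_def field_simps)
            qed
            have a2: "real (UU * (F - C * s)) \<le> g * real F"
            proof -
              have "F - C * s = F mod C" unfolding s_def by (metis minus_div_mult_eq_mod mult.commute)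
              also have "\<dots> < C" using CCpos CCC by simp
              finally have "UU * (F - C * s) \<le> UU * C" by simp
              hence "real (UU * (F - C * s)) \<le> real UU * real CC" using CCC
                by (metis of_nat_le_iff of_nat_mult)
              thus ?thesis using gF by linarith
            qed
            have "real (blen d) \<le> \<rho> * real F + real SH * real F + g * real F"
              using bb a1 a2 by (smt (verit) of_nat_add of_nat_le_iff of_nat_mult)
            also have "\<dots> = R * real F" by (simp add: Rx g_def algebra_simps)
            finally show "blen d \<le> nat \<lfloor>R * real F\<rfloor>" by (rule le_nat_floor)
          qed
        qed simp_all
      qed
    qed
  qed
qed


end
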